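(* Let $T$ be a tree on $n$ leaves and let $S$ be a minimal isolating set of $T$. Consider the forest $F$ obtained from $T$ by removing all edges in $S$. Then each connected component of $F$ contains exactly one leaf of $T$.
   Context: For a tree $T=(V,E)$, a subset $S\subseteq E$ is an isolating set if for any two distinct leaves $u,v$ there is an edge of $S$ on the path connecting $u$ and $v$. It is minimal if no proper subset of $S$ is an isolating set. *)

theory Defs
  imports Main
begin

definition is_path :: "'a set set \<Rightarrow> 'a list \<Rightarrow> 'a \<Rightarrow> 'a \<Rightarrow> bool" where
  "is_path E p u v \<longleftrightarrow> p \<noteq> [] \<and> hd p = u \<and> last p = v \<and> distinct p \<and>
     (\<forall>i < length p - 1. {p ! i, p ! Suc i} \<in> E)"

definition path_edges :: "'a list \<Rightarrow> 'a set set" where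
  "path_edges p = {{p ! i, p ! Suc i} | i. i < length p - 1}"

definition is_cycle :: "'a set set \<Rightarrow> 'a list \<Rightarrow> bool" where
  "is_cycle E c \<longleftrightarrow> length c \<ge> 3 \<and> distinct c \<and>
     (\<forall>i < length c - 1. {c ! i, c ! Suc i} \<in> E) \<and> {last c, hd c} \<in> E"

definition is_tree :: "'a set \<Rightarrow> 'a set set \<Rightarrow> bool" where
  "is_tree V E \<longleftrightarrow> finite V \<and> V \<noteq> {} \<and>
     (\<forall>e \<in> E. \<exists>x y. x \<noteq> y \<and> x \<in> V \<and> y \<in> V \<and> e = {x, y}) \<and>
     (\<forall>u \<in> V. \<forall>v \<in> V. \<exists>p. is_path E p u v) \<and>
     \<not> (\<exists>c. is_cycle E c)"

definition leaves :: "'a set \<Rightarrow> 'a set set \<Rightarrow> 'a set" where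
  "leaves V E = {v \<in> V. card {e \<in> E. v \<in> e} = 1}"

definition isolating_set :: "'a set \<Rightarrow> 'a set set \<Rightarrow> 'a set set \<Rightarrow> bool" where
  "isolating_set V E S \<longleftrightarrow> S \<subseteq> E \<and>
     (\<forall>u \<in> leaves V E. \<forall>v \<in> leaves V E. u \<noteq> v \<longrightarrow>
        (\<forall>p. is_path E p u v \<longrightarrow> path_edges p \<inter> S \<noteq> {}))"

definition minimal_isolating_set :: "'a set \<Rightarrow> 'a set set \<Rightarrow> 'a set set \<Rightarrow> bool" where
  "minimal_isolating_set V E S \<longleftrightarrow> isolating_set V E S \<and>
     (\<forall>S'. S' \<subset> S \<longrightarrow> \<not> isolating_set V E S')"

definition component :: "'a set \<Rightarrow> 'a set set \<Rightarrow> 'a \<Rightarrow> 'a set" where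
  "component V F x = {y \<in> V. \<exists>p. is_path F p x y}"

definition components :: "'a set \<Rightarrow> 'a set set \<Rightarrow> 'a set set" where
  "components V F = component V F ` V"

end

theory Submission
  imports Defs
begin

definition adj :: "'a set set \<Rightarrow> ('a \<times> 'a) set" where
  "adj F = {(x,y). {x,y} \<in> F}"

lemma chain:
  assumes "\<forall>j. a \<le> j \<and> j < b \<longrightarrow> {p!j, p!Suc j} \<in> F" "a \<le> b"
  shows "(p!a, p!b) \<in> (adj F)\<^sup>*"
  using assms(2,1)
proof (induction b rule: dec_induct)
  case base then show ?case by simp
next
  case (step n)
  then have "(p!n, p!Suc n) \<in> adj F" by (simp add: adj_def)
  with step show ?case by (meson le_refl less_Suc_eq rtrancl.rtrancl_into_rtrancl le_trans)
qed

lemma path_rtrancl: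
  assumes "is_path F p u v" shows "(u,v) \<in> (adj F)\<^sup>*"
proof -
  have "(p!0, p!(length p - 1)) \<in> (adj F)\<^sup>*"
    using assms unfolding is_path_def by (intro chain) auto
  moreover have "p \<noteq> []" "hd p = u" "last p = v" using assms unfolding is_path_def by auto
  ultimately show ?thesis by (simp add: hd_conv_nth last_conv_nth)
qed

lemma rtrancl_path:
  assumes "(u,v) \<in> (adj F)\<^sup>*" shows "\<exists>p. is_path F p u v"
  using assms
proof (induction rule: converse_rtrancl_induct)
  case base
  have "is_path F [v] v v" by (simp add: is_path_def)
  then show ?case by blast
next
  case (step u w)
  then obtain p where p: "is_path F p w v" by blast
  have uw: "{u,w} \<in> F" using step(1) by (simp add: adj_def)
  show ?case
  proof (cases "u \<in> set p")
    case True
    then obtain k where k: "k < length p" "p!k = u" by (auto simp: in_set_conv_nth)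
    have "is_path F (drop k p) u v"
      using p k unfolding is_path_def by (auto simp: hd_drop_conv_nth)
    then show ?thesis by blast
  next
    case False
    have "is_path F (u # p) u v"
      unfolding is_path_def
    proof (intro conjI allI impI)
      fix i assume i: "i < length (u # p) - 1"
      show "{(u # p) ! i, (u # p) ! Suc i} \<in> F"
      proof (cases i)
        case 0 then show ?thesis using p uw by (auto simp: is_path_def hd_conv_nth)
      next
        case (Suc j) then show ?thesis using p i by (auto simp: is_path_def)
      qed
    qed (use p False in \<open>auto simp: is_path_def\<close>)
    then show ?thesis by blast
  qed
qed

lemma adj_sym: "(a,b) \<in> (adj F)\<^sup>* \<Longrightarrow> (b,a) \<in> (adj F)\<^sup>*"
proof (induction rule: rtrancl_induct)
  case base then show ?case by simp
next
  case (step y z)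
  then have "(z,y) \<in> adj F" by (auto simp: adj_def insert_commute)
  with step show ?case by (meson converse_rtrancl_into_rtrancl)
qed

lemma path_edges_sub: "is_path F p u v \<Longrightarrow> path_edges p \<subseteq> F"
  by (auto simp: is_path_def path_edges_def)

lemma path_mono: "is_path F p u v \<Longrightarrow> F \<subseteq> G \<Longrightarrow> is_path G p u v"
  by (auto simp: is_path_def)

lemma tree_edge: "is_tree V E \<Longrightarrow> e \<in> E \<Longrightarrow> \<exists>x y. x \<noteq> y \<and> x \<in> V \<and> y \<in> V \<and> e = {x,y}"
  by (auto simp: is_tree_def)

lemma leaf_exists:
  assumes T: "is_tree V E" and c: "card V \<ge> 2"
  shows "\<exists>v. v \<in> leaves V E"
proof -
  define P where "P = {p. p \<noteq> [] \<and> distinct p \<and> set p \<subseteq> V \<and> (\<forall>i < length p - 1. {p!i, p!Suc i} \<in> E)}"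
  have fin: "finite V" using T by (simp add: is_tree_def)
  have Lsub: "length ` P \<subseteq> {..card V}"
  proof
    fix n assume "n \<in> length ` P"
    then obtain p where "p \<in> P" "n = length p" by blast
    then have "distinct p" "set p \<subseteq> V" "n = length p" unfolding P_def by auto
    then have "n = card (set p)" "card (set p) \<le> card V"
      using distinct_card card_mono[OF fin] by metis+
    then show "n \<in> {..card V}" by simp
  qed
  obtain a b where ab: "a \<in> V" "b \<in> V" "a \<noteq> b"
  proof -
    from c have "\<not> (\<forall>x\<in>V. \<forall>y\<in>V. x = y)"
      using card_le_Suc0_iff_eq[OF fin] by linarith
    then show ?thesis using that by blast
  qed
  have "\<exists>q. is_path E q a b" using T ab unfolding is_tree_def by blast
  then obtain q where q: "is_path E q a b" by blast
  have setq: "set q \<subseteq> V"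
  proof
    fix z assume "z \<in> set q"
    then obtain i where i: "i < length q" "q!i = z" by (auto simp: in_set_conv_nth)
    show "z \<in> V"
    proof (cases "i < length q - 1")
      case True
      then have "{q!i, q!Suc i} \<in> E" using q by (simp add: is_path_def)
      then obtain x y where "x \<in> V" "y \<in> V" "{q!i, q!Suc i} = {x,y}" using tree_edge[OF T] by blast
      then show ?thesis using i by (metis doubleton_eq_iff)
    next
      case False
      then have "i = length q - 1" using i by simp
      then have "z = b" using q i by (auto simp: is_path_def last_conv_nth)
      then show ?thesis using ab by simp
    qed
  qed
  have qP: "q \<in> P" using q setq by (auto simp: P_def is_path_def)
  have lq: "length q \<ge> 2"
  proof (rule ccontr)
    assume "\<not> ?thesis"
    moreover have "q \<noteq> []" using q by (simp add: is_path_def)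
    ultimately have "length q = 1" by (cases q) (auto simp: Suc_le_eq)
    then obtain z where "q = [z]" by (metis One_nat_def length_0_conv length_Suc_conv)
    then show False using q ab by (auto simp: is_path_def)
  qed
  define m where "m = Max (length ` P)"
  have finL: "finite (length ` P)" using Lsub finite_subset by blast
  have "m \<in> length ` P" unfolding m_def using qP finL by (intro Max_in) auto
  then obtain p where pP: "p \<in> P" and lp: "length p = m" by auto
  have maxp: "\<And>r. r \<in> P \<Longrightarrow> length r \<le> m" unfolding m_def using finL by auto
  have m2: "m \<ge> 2" using maxp[OF qP] lq by simp
  have pd: "distinct p" and ps: "set p \<subseteq> V" and pe: "\<And>i. i < m - 1 \<Longrightarrow> {p!i, p!Suc i} \<in> E"
    using pP lp by (auto simp: P_def)
  define v where "v = p!(m-1)"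
  define w0 where "w0 = p!(m-2)"
  have vV: "v \<in> V" using ps m2 lp by (auto simp: v_def)
  have e0: "{w0, v} \<in> E" using pe[of "m-2"] m2 by (simp add: v_def w0_def Suc_diff_Suc numeral_2_eq_2)
  have "{e \<in> E. v \<in> e} = {{w0, v}}"
  proof
    show "{{w0, v}} \<subseteq> {e \<in> E. v \<in> e}" using e0 by auto
  next
    show "{e \<in> E. v \<in> e} \<subseteq> {{w0, v}}"
    proof
      fix e assume e: "e \<in> {e \<in> E. v \<in> e}"
      then obtain w where w: "e = {v,w}" "w \<noteq> v" "w \<in> V"
        using tree_edge[OF T, of e] by auto
      have vwE: "{v,w} \<in> E" using e w by simp
      show "e \<in> {{w0, v}}"
      proof (rule ccontr)
        assume "e \<notin> {{w0, v}}"
        then have ww0: "w \<noteq> w0" using w by auto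
        show False
        proof (cases "w \<in> set p")
          case False
          have "p @ [w] \<in> P"
            unfolding P_def
          proof (intro CollectI conjI allI impI)
            fix i assume i: "i < length (p @ [w]) - 1"
            show "{(p @ [w]) ! i, (p @ [w]) ! Suc i} \<in> E"
            proof (cases "i < m - 1")
              case True
              then have "Suc i < m" "i < m" by auto
              then show ?thesis using pe[OF True] lp by (simp add: nth_append)
            next
              case False
              then have "i = m - 1" using i lp by simp
              then show ?thesis using vwE lp m2 by (simp add: nth_append v_def insert_commute)
            qed
          qed (use pd ps False w in auto)
          then show False using maxp lp by fastforce
        next
          case True
          then obtain j where j: "j < m" "p!j = w" using lp by (auto simp: in_set_conv_nth)
          have "j \<noteq> m - 1" using j w v_def by auto
          moreover have "j \<noteq> m - 2" using j ww0 w0_def by auto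
          ultimately have j3: "j + 3 \<le> m" using j m2 by linarith
          have "is_cycle E (drop j p)"
            unfolding is_cycle_def
          proof (intro conjI allI impI)
            fix i assume "i < length (drop j p) - 1"
            then show "{drop j p ! i, drop j p ! Suc i} \<in> E" using pe[of "j+i"] lp by simp
          next
            have "last (drop j p) = v" using j lp m2 by (simp add: last_conv_nth v_def)
            moreover have "hd (drop j p) = w" using j lp by (simp add: hd_drop_conv_nth)
            ultimately show "{last (drop j p), hd (drop j p)} \<in> E" using vwE by simp
          qed (use j3 lp pd in auto)
          then show False using T by (auto simp: is_tree_def)
        qed
      qed
    qed
  qed
  then have "v \<in> leaves V E" using vV by (simp add: leaves_def)
  then show ?thesis by blast
qed

lemma component_eq: "component V F x = {y \<in> V. (x,y) \<in> (adj F)\<^sup>*}"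
  unfolding component_def by (rule Collect_cong) (meson path_rtrancl rtrancl_path)

theorem proposition3:
  fixes V :: "'a set" and E S :: "'a set set"
  assumes "is_tree V E"
    and "card V \<ge> 2"
    and "minimal_isolating_set V E S"
  shows "\<forall>C \<in> components V (E - S). card (C \<inter> leaves V E) = 1"
proof
  fix C assume "C \<in> components V (E - S)"
  then obtain x where xV: "x \<in> V" and Cx: "C = component V (E - S) x"
    by (auto simp: components_def)
  let ?R = "adj (E - S)"
  let ?L = "leaves V E"
  have Ceq: "C = {y \<in> V. (x,y) \<in> ?R\<^sup>*}" using Cx component_eq by metis
  have iso: "isolating_set V E S" using assms(3) by (simp add: minimal_isolating_set_def)
  have LV: "?L \<subseteq> V" by (auto simp: leaves_def)
  have uniq: "u = v" if u: "u \<in> C \<inter> ?L" and v: "v \<in> C \<inter> ?L" for u v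
  proof (rule ccontr)
    assume uv: "u \<noteq> v"
    have "(x,u) \<in> ?R\<^sup>*" using u Ceq by blast
    then have "(u,x) \<in> ?R\<^sup>*" by (rule adj_sym)
    moreover have "(x,v) \<in> ?R\<^sup>*" using v Ceq by blast
    ultimately have "(u,v) \<in> ?R\<^sup>*" by (rule rtrancl_trans)
    then have "\<exists>p. is_path (E - S) p u v" by (rule rtrancl_path)
    then obtain p where p: "is_path (E - S) p u v" by blast
    then have "is_path E p u v" by (rule path_mono) auto
    moreover have "path_edges p \<inter> S = {}" using path_edges_sub[OF p] by auto
    moreover have "u \<in> ?L" "v \<in> ?L" using u v by auto
    ultimately show False using iso uv unfolding isolating_set_def by blast
  qed
  have ne: "C \<inter> ?L \<noteq> {}"
  proof (cases "\<exists>e\<in>S. \<exists>a\<in>e. a \<in> C")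
    case True
    then obtain e a where e: "e \<in> S" "a \<in> e" "a \<in> C" by blast
    have "S - {e} \<subset> S" using e by auto
    then have niso: "\<not> isolating_set V E (S - {e})" using assms(3) by (simp add: minimal_isolating_set_def)
    have SE: "S \<subseteq> E" using iso by (simp add: isolating_set_def)
    then obtain u v p where u: "u \<in> ?L" and v: "v \<in> ?L" and uv: "u \<noteq> v"
      and p: "is_path E p u v" and pS: "path_edges p \<inter> (S - {e}) = {}"
      using niso unfolding isolating_set_def by blast
    have "path_edges p \<inter> S \<noteq> {}" using iso u v uv p unfolding isolating_set_def by blast
    then have "e \<in> path_edges p" using pS by blast
    then obtain i where i: "i < length p - 1" "e = {p!i, p!Suc i}" by (auto simp: path_edges_def)
    have pd: "distinct p" and pne: "p \<noteq> []" using p by (auto simp: is_path_def)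
    have good: "\<And>j. j < length p - 1 \<Longrightarrow> j \<noteq> i \<Longrightarrow> {p!j, p!Suc j} \<in> E - S"
    proof -
      fix j assume j: "j < length p - 1" "j \<noteq> i"
      have inE: "{p!j, p!Suc j} \<in> E" using p j by (simp add: is_path_def)
      have inpe: "{p!j, p!Suc j} \<in> path_edges p" using j by (auto simp: path_edges_def)
      have "{p!j, p!Suc j} \<noteq> e"
      proof
        assume eq: "{p!j, p!Suc j} = e"
        have lens: "j < length p" "Suc j < length p" "i < length p" "Suc i < length p" using i j by auto
        from eq i have "p!j = p!i \<or> p!j = p!Suc i" by auto
        then have "j = i \<or> j = Suc i" using pd lens nth_eq_iff_index_eq by metis
        then have "j = Suc i" using j by simp
        moreover from eq i have "p!Suc j = p!i \<or> p!Suc j = p!Suc i" by auto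
        then have "Suc j = i \<or> Suc j = Suc i" using pd lens nth_eq_iff_index_eq by metis
        ultimately show False by simp
      qed
      then show "{p!j, p!Suc j} \<in> E - S" using inE inpe pS by blast
    qed
    have r1: "(p!0, p!i) \<in> ?R\<^sup>*" using good i by (intro chain) auto
    have r2: "(p!Suc i, p!(length p - 1)) \<in> ?R\<^sup>*" using good i by (intro chain) auto
    have hu: "p!0 = u" using p pne by (auto simp: is_path_def hd_conv_nth)
    have lv: "p!(length p - 1) = v" using p pne by (auto simp: is_path_def last_conv_nth)
    have xa: "(x,a) \<in> ?R\<^sup>*" using e Ceq by blast
    have "a = p!i \<or> a = p!Suc i" using e i by auto
    then show ?thesis
    proof
      assume "a = p!i"
      then have "(x,u) \<in> ?R\<^sup>*" using xa r1 hu adj_sym by (metis rtrancl_trans)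
      then have "u \<in> C" using Ceq u LV by blast
      then show ?thesis using u by blast
    next
      assume "a = p!Suc i"
      then have "(x,v) \<in> ?R\<^sup>*" using xa r2 lv by (metis rtrancl_trans)
      then have "v \<in> C" using Ceq v LV by blast
      then show ?thesis using v by blast
    qed
  next
    case False
    have "V \<subseteq> C"
    proof
      fix y assume yV: "y \<in> V"
      have "\<exists>p. is_path E p x y" using assms(1) xV yV unfolding is_tree_def by blast
      then obtain q where "is_path E q x y" by blast
      then have "(x,y) \<in> (adj E)\<^sup>*" by (rule path_rtrancl)
      then have "(x,y) \<in> ?R\<^sup>*"
      proof (induction rule: rtrancl_induct)
        case base then show ?case by simp
      next
        case (step w z)
        have wz: "{w,z} \<in> E" using step(2) by (simp add: adj_def)
        then obtain a b where "a \<in> V" "b \<in> V" "{w,z} = {a,b}" using tree_edge[OF assms(1)] by blast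
        then have "w \<in> V" by (metis doubleton_eq_iff)
        then have "w \<in> C" using Ceq step(3) by blast
        then have "{w,z} \<notin> S" using False by blast
        then have "(w,z) \<in> ?R" using wz by (simp add: adj_def)
        then show ?case using step(3) by simp
      qed
      then show "y \<in> C" using Ceq yV by blast
    qed
    then show ?thesis using leaf_exists[OF assms(1,2)] LV by blast
  qed
  then obtain u where u: "u \<in> C \<inter> ?L" by blast
  then have "C \<inter> ?L = {u}" using uniq by blast
  then show "card (C \<inter> ?L) = 1" by simp
qed

end
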